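(* Let $p,q$ be odd primes with $q-p=2$, and let $D=D_1\cdots D_n$ with $D_1,\dots,D_n$ distinct primes, $2\nmid D$, $p\nmid D$, $q\nmid D$; put $\widehat{D_i}=D/D_i$. Let $E'=E'_{+}: y^2=x^3-2(p+q)Dx^2+4D^2x$ and $\widehat\varphi:E'\to E$ the dual $2$-isogeny onto $E=E_+: y^2=x(x+pD)(x+qD)$. For each $i$ put $$\Pi_i^{+}(D)'=\Big(1-\big(\tfrac{-p\widehat{D_i}}{D_i}\big)\Big)\Big(1-\big(\tfrac{-q\widehat{D_i}}{D_i}\big)\Big)+\sum_{j=1,\,j\ne i}^{n}\Big(1-\big(\tfrac{D_i}{D_j}\big)\Big)\Big(1-\big(\tfrac{pqD_i}{D_j}\big)\Big).$$ Let $Z(n)=\{1,\dots,n\}$ and $I=\{i\in Z(n): D_i\equiv 1\ (\mathrm{mod}\ 8)\}\cup\{i: (1+p\widehat{D_i})(1+q\widehat{D_i})\equiv 0\ (\mathrm{mod}\ 16)\}\cup\{i: D_i\equiv 3\ (\mathrm{mod}\ 8),\ p\equiv 1\ (\mathrm{mod}\ 4)\}\cup\{i: D_i\equiv 7\ (\mathrm{mod}\ 8),\ p\equiv 3\ (\mathrm{mod}\ 4)\}$, and $\rho^{+}(D)'=\sum_{i\in I}\Big[\frac{1}{1+\Pi_i^{+}(D)'}\Big]$. Then there exists a subset $T\subset\{D_1,\dots,D_n\}$ with $\#T=\rho^{+}(D)'$ such that $S^{(\widehat\varphi)}(E'/\mathbb{Q})\supset\langle T\bmod\mathbb{Q}^{\star2}\rangle\cong(\mathbb{Z}/2\mathbb{Z})^{\rho^{+}(D)'}$.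 In particular $\dim_2 S^{(\widehat\varphi)}(E'/\mathbb{Q})\ge\rho^{+}(D)'$.
   Context: $(\frac{\cdot}{\cdot})$ is the Legendre symbol and $[x]$ the greatest integer $\le x$. The dual isogeny is $\widehat\varphi(x,y)=(y^2/(4x^2),\ y(4D^2-x^2)/(8x^2))$. The $\widehat\varphi$-Selmer group is viewed as a subgroup of $\mathbb{Q}^\star/\mathbb{Q}^{\star2}$: with $S=\{\infty,2,p,q,D_1,\dots,D_n\}$ and $\mathbb{Q}(S,2)=\langle -1,2,p,q,D_1,\dots,D_n\rangle$, it equals the set of $d\in\mathbb{Q}(S,2)$ (squarefree integer representatives) such that $C'_d: dw^2=d^2+(p+q)Dd z^2+pqD^2z^4$ has a $\mathbb{Q}_v$-point for every $v\in S$. *)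

theory Defs
  imports Complex_Main "HOL-Number_Theory.Number_Theory" "HOL-Computational_Algebra.Squarefree"
begin

text \<open>The quartic C'_d : d w^2 = d^2 + A d z^2 + B z^4 with A = (p+q)D, B = pqD^2,
  taken as a smooth projective curve in weighted projective space P(1,2,1) with
  coordinates (U,W,Z): d W^2 = d^2 U^4 + A d U^2 Z^2 + B Z^4.\<close>

definition quartic_form :: "int \<Rightarrow> int \<Rightarrow> int \<Rightarrow> int \<Rightarrow> int \<Rightarrow> int \<Rightarrow> int" where
  "quartic_form A B d U W Z = d * W^2 - (d^2 * U^4 + A * d * U^2 * Z^2 + B * Z^4)"

definition has_real_point :: "int \<Rightarrow> int \<Rightarrow> int \<Rightarrow> bool" where
  "has_real_point A B d \<longleftrightarrow>
     (\<exists>u w z :: real. (u, z) \<noteq> (0, 0) \<and>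
        of_int d * w^2 = of_int d^2 * u^4 + of_int A * of_int d * u^2 * z^2 + of_int B * z^4)"

text \<open>Q_l-point for a prime l: by compactness of Z_l, a Q_l-point of the projective curve
  exists iff for every k there is a solution modulo l^k with U, Z not both divisible by l.\<close>
definition has_padic_point :: "int \<Rightarrow> int \<Rightarrow> int \<Rightarrow> int \<Rightarrow> bool" where
  "has_padic_point l A B d \<longleftrightarrow>
     (\<forall>k::nat. \<exists>U W Z :: int. (\<not> l dvd U \<or> \<not> l dvd Z) \<and>
        [quartic_form A B d U W Z = 0] (mod l ^ k))"

text \<open>The hat-phi Selmer group of E', as a set of squarefree integer representatives in
  Q(S,2) = <-1,2,p,q,D_1,...,D_n>, with S = {infinity,2,p,q,D_1,...,D_n}.\<close>
definition selmer_hat :: "int \<Rightarrow> int \<Rightarrow> int \<Rightarrow> int set \<Rightarrow> int set" where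
  "selmer_hat p q D Ps =
     {d. d \<noteq> 0 \<and> squarefree d \<and>
         (\<forall>r::int. prime r \<and> r dvd d \<longrightarrow> r \<in> {2, p, q} \<union> Ps) \<and>
         has_real_point ((p + q) * D) (p * q * D^2) d \<and>
         (\<forall>l \<in> {2, p, q} \<union> Ps. has_padic_point l ((p + q) * D) (p * q * D^2) d)}"

text \<open>Squarefree representatives of the subgroup of Q*/Q*^2 generated by a finite set T
  of integers: classes of the products of subsets of T.\<close>
definition gen_sq :: "int set \<Rightarrow> int set" where
  "gen_sq T = {d. d \<noteq> 0 \<and> squarefree d \<and>
       (\<exists>U \<subseteq> T. \<exists>r::rat. r \<noteq> 0 \<and> of_int d * r^2 = of_int (\<Prod>U))}"

definition Pi_plus' :: "int \<Rightarrow> int \<Rightarrow> nat \<Rightarrow> (nat \<Rightarrow> int) \<Rightarrow> nat \<Rightarrow> int" where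
  "Pi_plus' p q n Ds i =
     (let D = (\<Prod>j\<in>{1..n}. Ds j); Dh = D div Ds i in
       (1 - Legendre (- p * Dh) (Ds i)) * (1 - Legendre (- q * Dh) (Ds i))
       + (\<Sum>j\<in>{1..n} - {i}. (1 - Legendre (Ds i) (Ds j)) * (1 - Legendre (p * q * Ds i) (Ds j))))"

definition I_set :: "int \<Rightarrow> int \<Rightarrow> nat \<Rightarrow> (nat \<Rightarrow> int) \<Rightarrow> nat set" where
  "I_set p q n Ds =
     {i \<in> {1..n}. let D = (\<Prod>j\<in>{1..n}. Ds j); Dh = D div Ds i in
        [Ds i = 1] (mod 8)
      \<or> [(1 + p * Dh) * (1 + q * Dh) = 0] (mod 16)
      \<or> ([Ds i = 3] (mod 8) \<and> [p = 1] (mod 4))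
      \<or> ([Ds i = 7] (mod 8) \<and> [p = 3] (mod 4))}"

definition rho_plus' :: "int \<Rightarrow> int \<Rightarrow> nat \<Rightarrow> (nat \<Rightarrow> int) \<Rightarrow> int" where
  "rho_plus' p q n Ds =
     (\<Sum>i\<in>I_set p q n Ds. \<lfloor>1 / (1 + real_of_int (Pi_plus' p q n Ds i))\<rfloor>)"

end

theory Submission
  imports Defs
begin



definition sqm :: "int \<Rightarrow> int \<Rightarrow> bool" where
  "sqm l c \<longleftrightarrow> (\<forall>K::nat. \<exists>x. [x^2 = c] (mod l^K))"

lemma sqm_mult: "sqm l a \<Longrightarrow> sqm l b \<Longrightarrow> sqm l (a*b)"
  unfolding sqm_def
proof (intro allI)
  fix K :: nat
  assume "\<forall>K. \<exists>x. [x^2 = a] (mod l^K)" "\<forall>K. \<exists>x. [x^2 = b] (mod l^K)"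
  then obtain x y where "[x^2 = a] (mod l^K)" "[y^2 = b] (mod l^K)" by blast
  then have "[(x*y)^2 = a*b] (mod l^K)" by (simp add: power_mult_distrib cong_mult)
  then show "\<exists>x. [x^2 = a*b] (mod l^K)" by blast
qed

lemma sqm_square: "sqm l (m^2)"
  unfolding sqm_def by (metis cong_refl)

lemma hensel_odd:
  fixes l c :: int
  assumes l: "prime l" "l \<noteq> 2" and L: "Legendre c l = 1"
  shows "sqm l c"
proof -
  have nd: "\<not> l dvd c" using L by (auto simp: Legendre_def cong_0_iff)
  have qr: "QuadRes l c" using L by (auto simp: Legendre_def split: if_splits)
  have main: "\<exists>x. [x^2 = c] (mod l^(Suc K))" for K
  proof (induction K)
    case 0
    then show ?case using qr by (simp add: QuadRes_def)
  next
    case (Suc K)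
    then obtain x where x: "[x^2 = c] (mod l^(Suc K))" by blast
    then obtain s where s: "x^2 - c = l^(Suc K) * s"
      by (metis cong_iff_dvd_diff cong_sym_eq dvd_def)
    have "\<not> l dvd x"
    proof
      assume "l dvd x"
      then have "l dvd x^2" by (simp add: power2_eq_square)
      moreover have "l dvd x^2 - c" using s by simp
      ultimately have "l dvd x^2 - (x^2 - c)" by (rule dvd_diff)
      then have "l dvd c" by simp
      with nd show False by simp
    qed
    have "\<not> l dvd 2"
    proof
      assume "l dvd 2"
      then have "l \<le> 2" by (simp add: zdvd_imp_le)
      moreover have "l \<ge> 2" using l(1) by (rule prime_ge_2_int)
      ultimately show False using l(2) by simp
    qed
    then have "\<not> l dvd 2 * x" using \<open>\<not> l dvd x\<close> l(1)
      by (simp add: prime_dvd_mult_iff)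
    then have "coprime l (2*x)" using l(1)
      by (intro prime_imp_coprime)
    then have "coprime (2*x) l" by (simp add: coprime_commute)
    then obtain u where u: "[(2*x) * u = 1] (mod l)"
      using cong_solve_coprime_int by blast
    define t where "t = - s * u"
    have "[s + 2*x*t = s - s * ((2*x)*u)] (mod l)" by (simp add: t_def algebra_simps)
    also have "[s - s * ((2*x)*u) = s - s * 1] (mod l)"
      by (intro cong_diff cong_refl cong_mult u)
    finally have "l dvd s + 2*x*t" by (simp add: cong_0_iff)
    then obtain m where m: "s + 2*x*t = l * m" by (auto simp: dvd_def)
    define P where "P = l^(Suc K)"
    have PP: "l^(Suc (Suc K)) = l * P" by (simp add: P_def)
    have P2: "P * P = (l * P) * l^K" by (simp add: P_def)
    define y where "y = x + t * P"
    have "y^2 - c = (x^2 - c) + P * (2*x*t) + t^2 * (P * P)"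
      by (simp add: y_def power2_eq_square algebra_simps)
    also have "\<dots> = P * (s + 2*x*t) + t^2 * (P * P)"
      using s by (simp add: P_def algebra_simps)
    also have "\<dots> = (l * P) * m + (l * P) * (t^2 * l^K)"
      unfolding m P2 by (simp add: algebra_simps)
    finally have "l^(Suc (Suc K)) dvd y^2 - c" unfolding PP
      by (metis dvd_add dvd_triv_left)
    then have "[y^2 = c] (mod l^(Suc (Suc K)))"
      by (simp add: cong_iff_dvd_diff cong_sym_eq)
    then show ?case by blast
  qed
  show ?thesis unfolding sqm_def
  proof
    fix K :: nat
    show "\<exists>x. [x^2 = c] (mod l^K)"
    proof (cases K)
      case 0 then show ?thesis by simp
    next
      case (Suc K') then show ?thesis using main by blast
    qed
  qed
qed

lemma hensel_two:
  fixes c :: int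
  assumes c: "[c = 1] (mod 8)"
  shows "sqm 2 c"
proof -
  have main: "\<exists>x. [x^2 = c] (mod 2^(K+3))" for K
  proof (induction K)
    case 0
    have "[1^2 = c] (mod 2^(0+3))" using c by (simp add: cong_sym)
    then show ?case by blast
  next
    case (Suc K)
    then obtain x where x: "[x^2 = c] (mod 2^(K+3))" by blast
    then obtain s where s: "x^2 - c = 2^(K+3) * s"
      by (metis cong_iff_dvd_diff cong_sym_eq dvd_def)
    have "c mod 8 = 1" using c by (simp add: cong_def)
    then have "odd c" by presburger
    have "odd x"
    proof
      assume "even x"
      then have "even (x^2)" by simp
      moreover have "even (x^2 - c)" using s by simp
      ultimately show False using \<open>odd c\<close> by simp
    qed
    show ?case
    proof (cases "even s")
      case True
      then obtain s' where "s = 2*s'" by blast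
      have e: "(2::int)^(Suc K + 3) = 2^(K+3) * 2" by (simp add: power_add)
      with s \<open>s = 2*s'\<close> have "x^2 - c = 2^(Suc K + 3) * s'" by (simp only: e)
      then have "2^(Suc K+3) dvd x^2 - c" by simp
      then have "[x^2 = c] (mod 2^(Suc K+3))"
        by (simp add: cong_iff_dvd_diff)
      then show ?thesis by blast
    next
      case False
      then have "even (s + x)" using \<open>odd x\<close> by simp
      then obtain m where m: "s + x = 2*m" by blast
      define P :: int where "P = 2^(K+2)"
      have P3: "(2::int)^(K+3) = 2 * P" by (simp add: P_def power_add)
      have P4: "(2::int)^(Suc K+3) = 4 * P" by (simp add: P_def power_add)
      have PP: "P * P = 4 * P * 2^K" by (simp add: P_def power_add)
      define y where "y = x + P"
      have "y^2 - c = (x^2 - c) + 2 * P * x + P * P"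
        by (simp add: y_def power2_eq_square algebra_simps)
      also have "\<dots> = 2 * P * (s + x) + P * P"
        using s P3 by (simp add: algebra_simps)
      also have "\<dots> = 4 * P * (m + 2^K)"
        unfolding m PP by (simp add: algebra_simps)
      finally have "2^(Suc K+3) dvd y^2 - c" unfolding P4 by simp
      then have "[y^2 = c] (mod 2^(Suc K+3))"
        by (simp add: cong_iff_dvd_diff)
      then show ?thesis by blast
    qed
  qed
  show ?thesis unfolding sqm_def
  proof
    fix K :: nat
    obtain x where x: "[x^2 = c] (mod 2^(K+3))" using main by blast
    have "(2::int)^K dvd 2^(K+3)" by (simp add: power_add)
    then have "[x^2 = c] (mod 2^K)" using x cong_dvd_modulus by blast
    then show "\<exists>x. [x^2 = c] (mod 2^K)" by blast
  qed
qed




lemma leg_cases: "Legendre a p = 0 \<or> Legendre a p = 1 \<or> Legendre a p = -1"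
  by (simp add: Legendre_def)

lemma leg_zero_iff: "Legendre a p = 0 \<longleftrightarrow> p dvd a"
  by (simp add: Legendre_def cong_0_iff)

lemma leg_cong: assumes "[a = b] (mod p)" shows "Legendre a p = Legendre b p"
proof -
  have ba: "[b = a] (mod p)" using assms by (rule cong_sym)
  have "QuadRes p a = QuadRes p b" unfolding QuadRes_def
  proof
    assume "\<exists>y. [y^2 = a] (mod p)"
    then obtain y where "[y^2 = a] (mod p)" by blast
    then have "[y^2 = b] (mod p)" using assms by (rule cong_trans)
    then show "\<exists>y. [y^2 = b] (mod p)" by blast
  next
    assume "\<exists>y. [y^2 = b] (mod p)"
    then obtain y where "[y^2 = b] (mod p)" by blast
    then have "[y^2 = a] (mod p)" using ba by (rule cong_trans)
    then show "\<exists>y. [y^2 = a] (mod p)" by blast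
  qed
  moreover have "[a = 0] (mod p) = [b = 0] (mod p)"
    using assms ba by (meson cong_trans)
  ultimately show ?thesis by (simp add: Legendre_def)
qed

lemma small_dvd_eq:
  fixes x y p :: int
  assumes "p > 2" "p dvd x - y" "x \<in> {-1,0,1}" "y \<in> {-1,0,1}"
  shows "x = y"
proof (rule ccontr)
  assume "x \<noteq> y"
  then have "x - y \<noteq> 0" by simp
  then have "\<bar>p\<bar> \<le> \<bar>x - y\<bar>" using assms(2) by (rule dvd_imp_le_int)
  moreover have "\<bar>x - y\<bar> \<le> 2" using assms(3,4) by auto
  ultimately show False using assms(1) by simp
qed

lemma leg_mult:
  assumes "prime p" "p \<noteq> 2"
  shows "Legendre (a*b) p = Legendre a p * Legendre b p"
proof -
  have p2: "p > 2" using assms prime_ge_2_int[OF assms(1)] by simp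
  define P where "P = nat p"
  have pP: "p = int P" using p2 by (simp add: P_def)
  have P1: "prime P" using assms(1) pP by simp
  have P2: "2 < P" using p2 pP by simp
  let ?k = "(P - 1) div 2"
  have 1: "[Legendre (a*b) p = (a*b)^?k] (mod p)"
    using euler_criterion[OF P1 P2] pP by simp
  have "[Legendre a p * Legendre b p = a^?k * b^?k] (mod p)"
    using euler_criterion[OF P1 P2, of a] euler_criterion[OF P1 P2, of b] pP
    by (simp add: cong_mult)
  then have "[a^?k * b^?k = Legendre a p * Legendre b p] (mod p)" by (rule cong_sym)
  then have "[Legendre (a*b) p = Legendre a p * Legendre b p] (mod p)"
    using 1 by (simp add: power_mult_distrib cong_trans)
  then have "p dvd Legendre (a*b) p - Legendre a p * Legendre b p"
    by (simp add: cong_iff_dvd_diff)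
  moreover have "Legendre (a*b) p \<in> {-1,0,1}" using leg_cases[of "a*b" p] by auto
  moreover have "Legendre a p * Legendre b p \<in> {-1,0,1}"
    using leg_cases[of a p] leg_cases[of b p] by auto
  ultimately show ?thesis using small_dvd_eq p2 by blast
qed

lemma leg_one: assumes "prime p" shows "Legendre 1 p = 1"
proof -
  have "\<not> p dvd 1" using assms by (simp add: prime_int_iff)
  moreover have "QuadRes p 1" unfolding QuadRes_def by (metis cong_refl one_power2)
  ultimately show ?thesis by (simp add: Legendre_def cong_0_iff)
qed

lemma leg_prod:
  assumes "prime p" "p \<noteq> 2"
  shows "Legendre (\<Prod>i\<in>A. f i) p = (\<Prod>i\<in>A. Legendre (f i) p)"
proof (induction A rule: infinite_finite_induct)
  case (infinite A)
  then show ?case using leg_one[OF assms(1)] by simp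
next
  case empty
  then show ?case using leg_one[OF assms(1)] by simp
next
  case (insert x F)
  then show ?case by (simp add: leg_mult[OF assms])
qed


lemma leg_sq: assumes "prime p" "\<not> p dvd m" shows "Legendre (m^2) p = 1"
proof -
  have "\<not> p dvd m^2" using assms prime_dvd_power_iff by (metis zero_less_numeral)
  moreover have "QuadRes p (m^2)" unfolding QuadRes_def by (metis cong_refl)
  ultimately show ?thesis by (simp add: Legendre_def cong_0_iff)
qed

lemma leg_sq_mult: assumes "prime p" "p \<noteq> 2" "\<not> p dvd m"
  shows "Legendre (m^2 * a) p = Legendre a p"
  using leg_mult[OF assms(1,2)] leg_sq[OF assms(1,3)] by simp

lemma leg_unit: "prime p \<Longrightarrow> \<not> p dvd a \<Longrightarrow> Legendre a p = 1 \<or> Legendre a p = -1"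
  using leg_cases[of a p] leg_zero_iff[of a p] by auto

lemma exists_nonres:
  fixes p c :: int
  assumes p: "prime p" and c: "\<not> p dvd c"
  shows "\<exists>x. \<not> p dvd x \<and> Legendre (x^2 + c) p \<noteq> 1"
proof (rule ccontr)
  assume H: "\<not> ?thesis"
  have all: "Legendre (1 + int k * c) p = 1" for k :: nat
  proof (induction k)
    case 0 then show ?case using leg_one[OF p] by simp
  next
    case (Suc k)
    then have "QuadRes p (1 + int k * c)" "\<not> p dvd (1 + int k * c)"
      by (auto simp: Legendre_def cong_0_iff split: if_splits)
    then obtain y where y: "[y^2 = 1 + int k * c] (mod p)" by (auto simp: QuadRes_def)
    have "\<not> p dvd y"
    proof
      assume "p dvd y"
      then have "p dvd y^2" by (simp add: power2_eq_square)
      then have "[y^2 = 0] (mod p)" by (simp add: cong_0_iff)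
      then have "[1 + int k * c = 0] (mod p)" using cong_trans[OF cong_sym[OF y]] by blast
      then show False using \<open>\<not> p dvd (1 + int k * c)\<close> by (simp add: cong_0_iff)
    qed
    then have "Legendre (y^2 + c) p = 1" using H by blast
    moreover have "[y^2 + c = 1 + int (Suc k) * c] (mod p)"
      using cong_add[OF y cong_refl[of c]] by (simp add: algebra_simps)
    ultimately show ?case using leg_cong by metis
  qed
  have "coprime p c" using p c by (intro prime_imp_coprime)
  then have "coprime c p" by (simp add: coprime_commute)
  then obtain u where u: "[c * u = 1] (mod p)" using cong_solve_coprime_int by blast
  have pp: "p > 0" using prime_gt_0_int[OF p] .
  define k where "k = nat ((- u) mod p)"
  have kk: "int k = (- u) mod p" unfolding k_def using pp by simp
  have "[int k = - u] (mod p)" unfolding kk by (simp add: cong_def)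
  then have "[1 + int k * c = 1 + (- u) * c] (mod p)" by (intro cong_add cong_mult cong_refl)
  also have "[1 + (-u) * c = 1 - c * u] (mod p)" by (simp add: algebra_simps)
  also have "[1 - c * u = 1 - 1] (mod p)" by (intro cong_diff cong_refl u)
  finally have "p dvd 1 + int k * c" by (simp add: cong_0_iff)
  then have "Legendre (1 + int k * c) p = 0" by (simp add: leg_zero_iff)
  with all[of k] show False by simp
qed




definition loc :: "int \<Rightarrow> int \<Rightarrow> int \<Rightarrow> int \<Rightarrow> int \<Rightarrow> bool" where
  "loc l d e a b \<longleftrightarrow> (\<forall>K::nat. \<exists>U W Z. (\<not> l dvd U \<or> \<not> l dvd Z) \<and>
      [W^2 = d * (U^2 + a*e*Z^2) * (U^2 + b*e*Z^2)] (mod l^K))"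

lemma loc_swap: "loc l d e a b = loc l d e b a"
  unfolding loc_def by (simp add: mult.commute mult.left_commute)

lemma loc_padic:
  assumes "D = d * e" "loc l d e p q"
  shows "has_padic_point l ((p+q)*D) (p*q*D^2) d"
  unfolding has_padic_point_def
proof
  fix K :: nat
  obtain U W Z where UZ: "\<not> l dvd U \<or> \<not> l dvd Z"
    and c: "[W^2 = d * (U^2 + p*e*Z^2) * (U^2 + q*e*Z^2)] (mod l^K)"
    using assms(2) unfolding loc_def by blast
  have eq: "quartic_form ((p+q)*D) (p*q*D^2) d U W Z
      = d * (W^2 - d * (U^2 + p*e*Z^2) * (U^2 + q*e*Z^2))"
    unfolding quartic_form_def assms(1) by (simp add: power2_eq_square power4_eq_xxxx algebra_simps)
  have "l^K dvd W^2 - d * (U^2 + p*e*Z^2) * (U^2 + q*e*Z^2)"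
    using c by (simp add: cong_iff_dvd_diff)
  then have "l^K dvd quartic_form ((p+q)*D) (p*q*D^2) d U W Z"
    unfolding eq by (rule dvd_mult)
  then have "[quartic_form ((p+q)*D) (p*q*D^2) d U W Z = 0] (mod l^K)"
    by (simp add: cong_0_iff)
  then show "\<exists>U W Z. (\<not> l dvd U \<or> \<not> l dvd Z) \<and> [quartic_form ((p+q)*D) (p*q*D^2) d U W Z = 0] (mod l^K)"
    using UZ by blast
qed

lemma loc_fixed:
  assumes "\<not> l dvd U \<or> \<not> l dvd Z"
    and "d * (U^2 + a*e*Z^2) * (U^2 + b*e*Z^2) = M^2 * R" and "sqm l R"
  shows "loc l d e a b"
  unfolding loc_def
proof
  fix K :: nat
  obtain w where w: "[w^2 = R] (mod l^K)" using assms(3) unfolding sqm_def by blast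
  have "[(M*w)^2 = M^2 * R] (mod l^K)" using w by (simp add: power_mult_distrib cong_mult)
  then have "[(M*w)^2 = d * (U^2 + a*e*Z^2) * (U^2 + b*e*Z^2)] (mod l^K)"
    using assms(2) by simp
  then show "\<exists>U W Z. (\<not> l dvd U \<or> \<not> l dvd Z) \<and> [W^2 = d * (U^2 + a*e*Z^2) * (U^2 + b*e*Z^2)] (mod l^K)"
    using assms(1) by blast
qed

lemma loc_var:
  assumes "prime l" "sqm l X0"
    and "d * (X0 + a*e) * (X0 + b*e) = M^2 * R" and "sqm l R"
  shows "loc l d e a b"
  unfolding loc_def
proof
  fix K :: nat
  obtain w where w: "[w^2 = R] (mod l^K)" using assms(4) unfolding sqm_def by blast
  obtain U where U: "[U^2 = X0] (mod l^K)" using assms(2) unfolding sqm_def by blast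
  have "[(M*w)^2 = M^2 * R] (mod l^K)" using w by (simp add: power_mult_distrib cong_mult)
  then have 1: "[(M*w)^2 = d * (X0 + a*e) * (X0 + b*e)] (mod l^K)"
    using assms(3) by simp
  have "[d * (U^2 + a*e*1^2) * (U^2 + b*e*1^2) = d * (X0 + a*e) * (X0 + b*e)] (mod l^K)"
    using U by (simp add: cong_add cong_mult)
  then have "[(M*w)^2 = d * (U^2 + a*e*1^2) * (U^2 + b*e*1^2)] (mod l^K)"
    using 1 cong_sym cong_trans by blast
  moreover have "\<not> l dvd 1" using assms(1) by (simp add: prime_int_iff)
  ultimately show "\<exists>U W Z. (\<not> l dvd U \<or> \<not> l dvd Z) \<and> [W^2 = d * (U^2 + a*e*Z^2) * (U^2 + b*e*Z^2)] (mod l^K)"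
    by blast
qed

lemma prime_ndvd1: "prime (l::int) \<Longrightarrow> \<not> l dvd 1"
  by (simp add: prime_int_iff)

lemma locA1:
  assumes "prime l" "l \<noteq> 2" "Legendre d l = 1"
  shows "loc l d e a b"
  by (rule loc_fixed[of l 1 0 d a e b 1 d]) (use assms prime_ndvd1 hensel_odd in auto)

lemma locA2:
  assumes "prime l" "l \<noteq> 2" "Legendre (a*b*d) l = 1"
  shows "loc l d e a b"
  by (rule loc_fixed[of l 0 1 d a e b e "a*b*d"])
     (use assms prime_ndvd1 hensel_odd in \<open>auto simp: power2_eq_square algebra_simps\<close>)

lemma locB:
  assumes l: "prime l" "l \<noteq> 2" and d: "d = l * d'" and nd: "\<not> l dvd d'" "\<not> l dvd e"
    and L: "Legendre (-(a*e)) l = 1"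
  shows "loc l d e a b"
proof -
  define t where "t = (b - a) * d' * e"
  define X0 where "X0 = -(a*e) + l * t"
  have "[X0 = -(a*e)] (mod l)" unfolding X0_def by (simp add: cong_iff_dvd_diff)
  then have "Legendre X0 l = 1" using L leg_cong by simp
  then have sX: "sqm l X0" using hensel_odd l by blast
  have "[1 + l * d' = 1] (mod l)" by (simp add: cong_def)
  then have "Legendre (1 + l*d') l = 1" using leg_cong leg_one[OF l(1)] by simp
  then have sR: "sqm l (1 + l*d')" using hensel_odd l by blast
  have "d * (X0 + a*e) * (X0 + b*e) = (l * (b-a) * d' * e)^2 * (1 + l*d')"
    unfolding X0_def t_def d by (simp add: power2_eq_square algebra_simps)
  then show ?thesis using loc_var[OF l(1) sX _ sR] by blast
qed

lemma locC:
  assumes l: "prime l" "l \<noteq> 2" and nd: "\<not> l dvd d" "\<not> l dvd e" "\<not> l dvd m"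
  shows "loc l d e l m"
proof -
  consider "Legendre d l = 1" | "Legendre (-(m*e)) l = 1"
    | "Legendre d l \<noteq> 1" "Legendre (-(m*e)) l \<noteq> 1" by blast
  then show ?thesis
  proof cases
    case 1 then show ?thesis using locA1 l by blast
  next
    case 2
    define t where "t = (l - m) * e * d"
    define X0 where "X0 = -(m*e) + l^2 * t"
    have "[X0 = -(m*e)] (mod l)" unfolding X0_def by (simp add: cong_iff_dvd_diff power2_eq_square)
    then have "Legendre X0 l = 1" using 2 leg_cong by simp
    then have sX: "sqm l X0" using hensel_odd l by blast
    have "[1 + l^2 * d = 1] (mod l)" by (simp add: cong_iff_dvd_diff power2_eq_square)
    then have "Legendre (1 + l^2*d) l = 1" using leg_cong leg_one[OF l(1)] by simp
    then have sR: "sqm l (1 + l^2*d)" using hensel_odd l by blast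
    have "d * (X0 + l*e) * (X0 + m*e) = (l * (l-m) * e * d)^2 * (1 + l^2*d)"
      unfolding X0_def t_def by (simp add: power2_eq_square algebra_simps)
    then show ?thesis using loc_var[OF l(1) sX _ sR] by blast
  next
    case 3
    have "\<not> l dvd m*e" using nd l(1) by (simp add: prime_dvd_mult_iff)
    then obtain x where x: "\<not> l dvd x" "Legendre (x^2 + m*e) l \<noteq> 1"
      using exists_nonres[OF l(1)] by blast
    have "\<not> l dvd x^2 + m*e"
    proof
      assume "l dvd x^2 + m*e"
      then have "l dvd -(x^2 + m*e)" by (simp only: dvd_minus_iff)
      then have "[-(m*e) = x^2] (mod l)" by (simp add: cong_iff_dvd_diff algebra_simps)
      then have "Legendre (-(m*e)) l = Legendre (x^2) l" by (rule leg_cong)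
      then show False using 3 leg_sq[OF l(1) x(1)] by simp
    qed
    then have L1: "Legendre (x^2 + m*e) l = -1" using leg_unit[OF l(1)] x(2) by blast
    have L2: "Legendre d l = -1" using leg_unit[OF l(1) nd(1)] 3 by blast
    have "[x^2 + l*e = x^2] (mod l)" by (simp add: cong_def)
    then have L3: "Legendre (x^2 + l*e) l = 1" using leg_cong leg_sq[OF l(1) x(1)] by simp
    have "Legendre (d * (x^2 + l*e*1^2) * (x^2 + m*e*1^2)) l = 1"
      using L1 L2 L3 leg_mult[OF l] by simp
    then have "sqm l (d * (x^2 + l*e*1^2) * (x^2 + m*e*1^2))" using hensel_odd l by blast
    then show ?thesis
      by (intro loc_fixed[of l x 1 d l e m 1]) (use x(1) in auto)
  qed
qed

lemma odd_res8: assumes "odd (x::int)" shows "x mod 8 \<in> {1,3,5,7}"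
proof -
  have "x mod 8 = 1 \<or> x mod 8 = 3 \<or> x mod 8 = 5 \<or> x mod 8 = 7" using assms by presburger
  then show ?thesis by auto
qed

lemma loc2a: assumes "[d = 1] (mod 8)" shows "loc 2 d e a b"
  by (rule loc_fixed[of 2 1 0 d a e b 1 d]) (use assms hensel_two in auto)

lemma loc2b: assumes "[a*b*d = 1] (mod 8)" shows "loc 2 d e a b"
  by (rule loc_fixed[of 2 0 1 d a e b e "a*b*d"])
     (use assms hensel_two in \<open>auto simp: power2_eq_square algebra_simps\<close>)

lemma R8:
  fixes d e s :: int
  assumes "odd d" "odd e" "s = 1 \<or> s = -1"
  shows "[d * (d * (4 + s*e)) * (4 * (d * (4 + s*e)) + s*e) = 1] (mod 8)"
proof -
  have hd: "[d = d mod 8] (mod 8)" "[e = e mod 8] (mod 8)" by (simp_all add: cong_def)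
  have "[d * (d * (4 + s*e)) * (4 * (d * (4 + s*e)) + s*e)
       = (d mod 8) * ((d mod 8) * (4 + s*(e mod 8))) * (4 * ((d mod 8) * (4 + s*(e mod 8))) + s*(e mod 8))] (mod 8)"
    by (intro cong_mult cong_add cong_refl hd)
  moreover have "[(d mod 8) * ((d mod 8) * (4 + s*(e mod 8))) * (4 * ((d mod 8) * (4 + s*(e mod 8))) + s*(e mod 8)) = 1] (mod 8)"
    using odd_res8[OF assms(1)] odd_res8[OF assms(2)] assms(3)
    by (auto simp: cong_def)
  ultimately show ?thesis by (rule cong_trans)
qed

lemma loc2c:
  assumes "odd d" "odd e" "s = 1 \<or> s = -1" "b = a + 2*s" "[a*e = 7] (mod 8)"
  shows "loc 2 d e a b"
proof -
  define t where "t = d * (4 + s*e)"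
  define X0 where "X0 = -(a*e) + 8 * t"
  have "[X0 = -(a*e)] (mod 8)" unfolding X0_def by (simp add: cong_iff_dvd_diff)
  moreover have "[-(a*e) = 1] (mod 8)" using assms(5) by (simp add: cong_def) presburger
  ultimately have "[X0 = 1] (mod 8)" by (rule cong_trans)
  then have sX: "sqm 2 X0" by (rule hensel_two)
  define R where "R = d * t * (4 * t + s*e)"
  have "[R = 1] (mod 8)" unfolding R_def t_def using R8[OF assms(1-3)] .
  then have sR: "sqm 2 R" by (rule hensel_two)
  have eq: "d * (X0 + a*e) * (X0 + b*e) = 4^2 * R"
    unfolding X0_def R_def assms(4) by (simp add: power2_eq_square algebra_simps)
  show ?thesis by (rule loc_var[OF _ sX eq sR]) simp
qed




lemma odd_res16: assumes "odd (x::int)" shows "x mod 16 \<in> {1,3,5,7,9,11,13,15}"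
proof -
  have "x mod 16 = 1 \<or> x mod 16 = 3 \<or> x mod 16 = 5 \<or> x mod 16 = 7 \<or> x mod 16 = 9
    \<or> x mod 16 = 11 \<or> x mod 16 = 13 \<or> x mod 16 = 15" using assms by presburger
  then show ?thesis by auto
qed

lemma odd_res8': assumes "odd (x::int)" shows "x mod 8 \<in> {1,3,5,7}"
proof -
  have "x mod 8 = 1 \<or> x mod 8 = 3 \<or> x mod 8 = 5 \<or> x mod 8 = 7" using assms by presburger
  then show ?thesis by auto
qed

definition full :: "int \<Rightarrow> int \<Rightarrow> bool" where
  "full p D \<longleftrightarrow> (p mod 4 = 1 \<and> (p*D) mod 8 \<in> {1,3}) \<or> (p mod 4 = 3 \<and> (p*D) mod 8 \<in> {3,5})"

lemma F1_res:
  assumes "rp \<in> {1,3,5,7,9,11,13,15}" "rD \<in> {1,3,5,7::int}" "re \<in> {1,3,5,7,9,11,13,15}"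
    "((1+rp*re)*(1+(rp+2)*re)) mod 16 = 0" "rD \<noteq> 1" "(rD*rp*(rp+2)) mod 8 \<noteq> 1"
  shows "(rp mod 4 = 1 \<and> (rp*rD*re) mod 8 \<in> {1,3}) \<or> (rp mod 4 = 3 \<and> (rp*rD*re) mod 8 \<in> {3,5})"
  using assms by auto

lemma m16_8: "[(x::int) mod 16 = x] (mod 8)"
  by (simp add: cong_def mod_mod_cancel)

lemma m16_4: "(x::int) mod 16 mod 4 = x mod 4"
  by (simp add: mod_mod_cancel)

lemma F1:
  fixes p Di ei :: int
  assumes "odd p" "odd Di" "odd ei" "[(1+p*ei)*(1+(p+2)*ei) = 0] (mod 16)"
    "\<not> [Di = 1] (mod 8)" "\<not> [Di*p*(p+2) = 1] (mod 8)"
  shows "full p (Di*ei)"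
proof -
  define rp where "rp = p mod 16"
  define re where "re = ei mod 16"
  define rD where "rD = Di mod 8"
  have cp: "[p = rp] (mod 16)" "[ei = re] (mod 16)" unfolding rp_def re_def by (simp_all add: cong_def)
  have "[(1+p*ei)*(1+(p+2)*ei) = (1+rp*re)*(1+(rp+2)*re)] (mod 16)"
    by (intro cong_mult cong_add cong_refl cp)
  then have h1: "((1+rp*re)*(1+(rp+2)*re)) mod 16 = 0"
    using assms(4) by (simp add: cong_def)
  have h2: "rD \<noteq> 1" using assms(5) unfolding rD_def by (simp add: cong_def)
  have c8: "[p = rp] (mod 8)" "[ei = re] (mod 8)" "[Di = rD] (mod 8)"
    unfolding rp_def re_def rD_def using m16_8 by (simp_all add: cong_sym cong_def)
  have "[Di*p*(p+2) = rD*rp*(rp+2)] (mod 8)"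
    by (intro cong_mult cong_add cong_refl c8)
  then have h3: "(rD*rp*(rp+2)) mod 8 \<noteq> 1"
    using assms(6) by (simp add: cong_def)
  have "[p*(Di*ei) = rp*rD*re] (mod 8)"
    unfolding mult.assoc by (intro cong_mult cong_add cong_refl c8)
  then have h4: "(p*(Di*ei)) mod 8 = (rp*rD*re) mod 8" by (simp add: cong_def)
  have h5: "p mod 4 = rp mod 4" unfolding rp_def by (simp add: m16_4)
  have "(rp mod 4 = 1 \<and> (rp*rD*re) mod 8 \<in> {1,3}) \<or> (rp mod 4 = 3 \<and> (rp*rD*re) mod 8 \<in> {3,5})"
    apply (rule F1_res[OF _ _ _ h1 h2 h3])
    using odd_res16[OF assms(1)] odd_res16[OF assms(3)] odd_res8'[OF assms(2)]
    unfolding rp_def re_def rD_def by auto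
  then show ?thesis unfolding full_def h4 h5 .
qed

lemma F2_res:
  assumes "rp \<in> {1,3,5,7::int}" "rd \<in> {1,3,5,7::int}" "re \<in> {1,3,5,7::int}"
    "(rp mod 4 = 1 \<and> (rp*rd*re) mod 8 \<in> {1,3}) \<or> (rp mod 4 = 3 \<and> (rp*rd*re) mod 8 \<in> {3,5})"
  shows "rd mod 8 = 1 \<or> (rp*(rp+2)*rd) mod 8 = 1 \<or> (rp*re) mod 8 = 7 \<or> ((rp+2)*re) mod 8 = 7"
  using assms by auto

lemma F2:
  fixes p d e :: int
  assumes "odd p" "odd d" "odd e" "full p (d*e)"
  shows "[d = 1] (mod 8) \<or> [p*(p+2)*d = 1] (mod 8) \<or> [p*e = 7] (mod 8) \<or> [(p+2)*e = 7] (mod 8)"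
proof -
  define rp where "rp = p mod 8"
  define re where "re = e mod 8"
  define rd where "rd = d mod 8"
  have c8: "[p = rp] (mod 8)" "[e = re] (mod 8)" "[d = rd] (mod 8)"
    unfolding rp_def re_def rd_def by (simp_all add: cong_def)
  have e1: "[p*(d*e) = rp*rd*re] (mod 8)"
    unfolding mult.assoc by (intro cong_mult cong_refl c8)
  have e2: "[p*(p+2)*d = rp*(rp+2)*rd] (mod 8)" by (intro cong_mult cong_add cong_refl c8)
  have e3: "[p*e = rp*re] (mod 8)" by (intro cong_mult cong_refl c8)
  have e4: "[(p+2)*e = (rp+2)*re] (mod 8)" by (intro cong_mult cong_add cong_refl c8)
  have pm4: "p mod 4 = rp mod 4" unfolding rp_def by (simp add: mod_mod_cancel)
  have f: "(p*(d*e)) mod 8 = (rp*rd*re) mod 8" using e1 by (simp add: cong_def)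
  have "rd mod 8 = 1 \<or> (rp*(rp+2)*rd) mod 8 = 1 \<or> (rp*re) mod 8 = 7 \<or> ((rp+2)*re) mod 8 = 7"
  proof (rule F2_res)
    show "rp \<in> {1,3,5,7}" unfolding rp_def by (rule odd_res8'[OF assms(1)])
    show "rd \<in> {1,3,5,7}" unfolding rd_def by (rule odd_res8'[OF assms(2)])
    show "re \<in> {1,3,5,7}" unfolding re_def by (rule odd_res8'[OF assms(3)])
    show "(rp mod 4 = 1 \<and> (rp*rd*re) mod 8 \<in> {1,3}) \<or> (rp mod 4 = 3 \<and> (rp*rd*re) mod 8 \<in> {3,5})"
      using assms(4) unfolding full_def f pm4 .
  qed
  then show ?thesis
  proof (elim disjE)
    assume "rd mod 8 = 1" then show ?thesis unfolding rd_def cong_def by simp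
  next
    assume "(rp*(rp+2)*rd) mod 8 = 1"
    then have "[p*(p+2)*d = 1] (mod 8)" using e2 unfolding cong_def by simp
    then show ?thesis by blast
  next
    assume "(rp*re) mod 8 = 7"
    then have "[p*e = 7] (mod 8)" using e3 unfolding cong_def by simp
    then show ?thesis by blast
  next
    assume "((rp+2)*re) mod 8 = 7"
    then have "[(p+2)*e = 7] (mod 8)" using e4 unfolding cong_def by simp
    then show ?thesis by blast
  qed
qed

lemma Icond_res:
  assumes "rp \<in> {1,3,5,7::int}" "rD \<in> {1,3,5,7::int}"
    "(rD = 3 \<and> rp mod 4 = 1) \<or> (rD = 7 \<and> rp mod 4 = 3)"
  shows "(rD*rp*(rp+2)) mod 8 = 1"
  using assms by auto

lemma Icond:
  fixes p Di :: int
  assumes "odd p" "odd Di" "([Di = 3] (mod 8) \<and> [p = 1] (mod 4)) \<or> ([Di = 7] (mod 8) \<and> [p = 3] (mod 4))"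
  shows "[Di*p*(p+2) = 1] (mod 8)"
proof -
  define rp where "rp = p mod 8"
  define rD where "rD = Di mod 8"
  have c8: "[p = rp] (mod 8)" "[Di = rD] (mod 8)"
    unfolding rp_def rD_def by (simp_all add: cong_def)
  have e: "[Di*p*(p+2) = rD*rp*(rp+2)] (mod 8)" by (intro cong_mult cong_add cong_refl c8)
  have pm4: "p mod 4 = rp mod 4" unfolding rp_def by (simp add: mod_mod_cancel)
  have "(rD*rp*(rp+2)) mod 8 = 1"
  proof (rule Icond_res)
    show "rp \<in> {1,3,5,7}" unfolding rp_def by (rule odd_res8'[OF assms(1)])
    show "rD \<in> {1,3,5,7}" unfolding rD_def by (rule odd_res8'[OF assms(2)])
    show "(rD = 3 \<and> rp mod 4 = 1) \<or> (rD = 7 \<and> rp mod 4 = 3)"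
      using assms(3) unfolding rD_def pm4[symmetric] cong_def by auto
  qed
  then show ?thesis using e unfolding cong_def by simp
qed

lemma pq_sq8: assumes "odd (p::int)" shows "[(p*(p+2))^2 = 1] (mod 8)"
proof -
  define rp where "rp = p mod 8"
  have c8: "[p = rp] (mod 8)" unfolding rp_def by (simp add: cong_def)
  have e: "[(p*(p+2))^2 = (rp*(rp+2))^2] (mod 8)" by (intro cong_pow cong_mult cong_add cong_refl c8)
  have "rp \<in> {1,3,5,7}" unfolding rp_def by (rule odd_res8'[OF assms])
  then have "((rp*(rp+2))^2) mod 8 = 1" by auto
  then show ?thesis using e unfolding cong_def by simp
qed

definition G8 :: "int \<Rightarrow> int \<Rightarrow> bool" where
  "G8 p x \<longleftrightarrow> [x = 1] (mod 8) \<or> [x*(p*(p+2)) = 1] (mod 8)"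

lemma G8_mult: assumes "odd p" "G8 p x" "G8 p y" shows "G8 p (x*y)"
proof -
  define g where "g = p*(p+2)"
  have g2: "[g^2 = 1] (mod 8)" using pq_sq8[OF assms(1)] unfolding g_def .
  have hx: "[x = 1] (mod 8) \<or> [x*g = 1] (mod 8)" using assms(2) unfolding G8_def g_def .
  have hy: "[y = 1] (mod 8) \<or> [y*g = 1] (mod 8)" using assms(3) unfolding G8_def g_def .
  have "[x*y = 1] (mod 8) \<or> [(x*y)*g = 1] (mod 8)"
  proof (cases "[x = 1] (mod 8)")
    case x1: True
    show ?thesis
    proof (cases "[y = 1] (mod 8)")
      case True
      then have "[x*y = 1*1] (mod 8)" using x1 by (intro cong_mult)
      then show ?thesis by simp
    next
      case False
      then have "[y*g = 1] (mod 8)" using hy by blast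
      then have "[x*(y*g) = 1*1] (mod 8)" using x1 by (intro cong_mult)
      then show ?thesis by (simp add: mult.assoc)
    qed
  next
    case x0: False
    then have xg: "[x*g = 1] (mod 8)" using hx by blast
    show ?thesis
    proof (cases "[y = 1] (mod 8)")
      case True
      then have "[(x*g)*y = 1*1] (mod 8)" using xg by (intro cong_mult)
      then show ?thesis by (simp add: ac_simps)
    next
      case False
      then have "[y*g = 1] (mod 8)" using hy by blast
      then have 1: "[(x*g)*(y*g) = 1*1] (mod 8)" using xg by (intro cong_mult)
      have A: "(x*g)*(y*g) = x*y*g^2" by (simp add: power2_eq_square ac_simps)
      have "[x*y*g^2 = x*y*1] (mod 8)" using g2 by (intro cong_mult cong_refl)
      then have "[x*y = x*y*g^2] (mod 8)" by (simp add: cong_sym)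
      moreover have "[x*y*g^2 = 1] (mod 8)" using 1 A by simp
      ultimately have "[x*y = 1] (mod 8)" by (rule cong_trans)
      then show ?thesis by blast
    qed
  qed
  then show ?thesis unfolding G8_def g_def .
qed

lemma G8_prod: assumes "odd p" "\<And>i. i \<in> A \<Longrightarrow> G8 p (f i)" shows "G8 p (\<Prod>i\<in>A. f i)"
  using assms(2)
proof (induction A rule: infinite_finite_induct)
  case (infinite A) then show ?case by (simp add: G8_def)
next
  case empty then show ?case by (simp add: G8_def)
next
  case (insert x F) then show ?case using G8_mult[OF assms(1)] by simp
qed




lemma two_adic:
  fixes p d e D :: int and A :: "nat set" and f :: "nat \<Rightarrow> int"
  assumes p: "odd p" and d: "d = (\<Prod>i\<in>A. f i)" and De: "D = d * e" and od: "odd d" "odd e"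
    and H: "\<And>i. i \<in> A \<Longrightarrow> f i dvd D \<and>
       ([f i = 1] (mod 8)
      \<or> [(1 + p * (D div f i)) * (1 + (p+2) * (D div f i)) = 0] (mod 16)
      \<or> ([f i = 3] (mod 8) \<and> [p = 1] (mod 4))
      \<or> ([f i = 7] (mod 8) \<and> [p = 3] (mod 4)))"
  shows "loc 2 d e p (p+2)"
proof -
  have oD: "odd D" using De od by simp
  have fin: "[d = 1] (mod 8) \<or> [p*(p+2)*d = 1] (mod 8) \<or> [p*e = 7] (mod 8) \<or> [(p+2)*e = 7] (mod 8)
      \<Longrightarrow> loc 2 d e p (p+2)"
  proof (elim disjE)
    assume "[d = 1] (mod 8)" then show ?thesis by (rule loc2a)
  next
    assume "[p*(p+2)*d = 1] (mod 8)" then show ?thesis by (rule loc2b)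
  next
    assume h: "[p*e = 7] (mod 8)"
    show ?thesis by (rule loc2c[where s=1 and a=p and b="p+2", OF od(1) od(2) _ _ h]) simp_all
  next
    assume h: "[(p+2)*e = 7] (mod 8)"
    have "loc 2 d e (p+2) p" by (rule loc2c[where s="-1" and a="p+2" and b=p, OF od(1) od(2) _ _ h]) simp_all
    then show ?thesis using loc_swap by blast
  qed
  show ?thesis
  proof (cases "\<forall>i\<in>A. G8 p (f i)")
    case True
    have "G8 p d" unfolding d by (rule G8_prod[OF p]) (use True in simp)
    then have "[d = 1] (mod 8) \<or> [p*(p+2)*d = 1] (mod 8)" unfolding G8_def by (simp add: ac_simps)
    then show ?thesis using fin by blast
  next
    case False
    then obtain i where i: "i \<in> A" "\<not> G8 p (f i)" by auto
    have fi: "f i dvd D" using H[OF i(1)] by blast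
    then obtain ei where ei: "D = f i * ei" by (auto simp: dvd_def)
    have oi: "odd (f i)" "odd ei" using oD unfolding ei by simp_all
    have fnz: "f i \<noteq> 0" using oi(1) by (metis even_zero)
    have Dh: "D div f i = ei" using ei fnz by simp
    have n1: "\<not> [f i = 1] (mod 8)" using i(2) unfolding G8_def by blast
    have n2: "\<not> [f i * p * (p+2) = 1] (mod 8)" using i(2) unfolding G8_def by (simp add: ac_simps)
    have n3: "\<not> (([f i = 3] (mod 8) \<and> [p = 1] (mod 4)) \<or> ([f i = 7] (mod 8) \<and> [p = 3] (mod 4)))"
      using Icond[OF p oi(1)] n2 by blast
    have "[(1 + p * (D div f i)) * (1 + (p+2) * (D div f i)) = 0] (mod 16)"
      using H[OF i(1)] n1 n3 by blast
    then have c16: "[(1 + p * ei) * (1 + (p+2) * ei) = 0] (mod 16)" unfolding Dh .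
    have "full p (f i * ei)" using F1[OF p oi c16 n1 n2] .
    then have "full p (d * e)" using ei De by metis
    then show ?thesis using F2[OF p od] fin by blast
  qed
qed




lemma leg_le1: "Legendre a p \<le> 1"
  by (simp add: Legendre_def)

lemma pterm_nonneg: "0 \<le> (1 - Legendre a p) * (1 - Legendre b p)"
  using leg_le1[of a p] leg_le1[of b p] by simp

lemma pterm_zero: "(1 - Legendre a p) * (1 - Legendre b p) = 0 \<Longrightarrow> Legendre a p = 1 \<or> Legendre b p = 1"
  by simp

lemma Pi_nonneg: "Pi_plus' p q n Ds i \<ge> 0"
  unfolding Pi_plus'_def Let_def
  by (intro add_nonneg_nonneg pterm_nonneg sum_nonneg) 

lemma Pi_zero:
  assumes "Pi_plus' p q n Ds i = 0"
  shows "Legendre (- p * ((\<Prod>j\<in>{1..n}. Ds j) div Ds i)) (Ds i) = 1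
           \<or> Legendre (- q * ((\<Prod>j\<in>{1..n}. Ds j) div Ds i)) (Ds i) = 1"
    and "\<And>j. j \<in> {1..n} - {i} \<Longrightarrow> Legendre (Ds i) (Ds j) = 1 \<or> Legendre (p * q * Ds i) (Ds j) = 1"
proof -
  define a where "a = (1 - Legendre (- p * ((\<Prod>j\<in>{1..n}. Ds j) div Ds i)) (Ds i))
       * (1 - Legendre (- q * ((\<Prod>j\<in>{1..n}. Ds j) div Ds i)) (Ds i))"
  define b where "b = (\<lambda>j. (1 - Legendre (Ds i) (Ds j)) * (1 - Legendre (p * q * Ds i) (Ds j)))"
  have eq: "Pi_plus' p q n Ds i = a + (\<Sum>j\<in>{1..n} - {i}. b j)"
    unfolding Pi_plus'_def Let_def a_def b_def ..
  have a0: "a \<ge> 0" unfolding a_def by (rule pterm_nonneg)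
  have b0: "\<And>j. b j \<ge> 0" unfolding b_def by (rule pterm_nonneg)
  have s0: "(\<Sum>j\<in>{1..n} - {i}. b j) \<ge> 0" using b0 by (simp add: sum_nonneg)
  have "a = 0" using eq assms a0 s0 by simp
  then show "Legendre (- p * ((\<Prod>j\<in>{1..n}. Ds j) div Ds i)) (Ds i) = 1
           \<or> Legendre (- q * ((\<Prod>j\<in>{1..n}. Ds j) div Ds i)) (Ds i) = 1"
    unfolding a_def by (rule pterm_zero)
  have "(\<Sum>j\<in>{1..n} - {i}. b j) = 0" using eq assms a0 s0 by simp
  then have "\<forall>j\<in>{1..n} - {i}. b j = 0" using b0 by (subst (asm) sum_nonneg_eq_0_iff) auto
  then show "\<And>j. j \<in> {1..n} - {i} \<Longrightarrow> Legendre (Ds i) (Ds j) = 1 \<or> Legendre (p * q * Ds i) (Ds j) = 1"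
    unfolding b_def using pterm_zero by blast
qed

lemma floor_term: assumes "(x::int) \<ge> 0"
  shows "\<lfloor>1 / (1 + real_of_int x)\<rfloor> = (if x = 0 then 1 else 0)"
proof (cases "x = 0")
  case True then show ?thesis by simp
next
  case False
  then have "x \<ge> 1" using assms by simp
  then have "1 / (1 + real_of_int x) < 1" "0 \<le> 1 / (1 + real_of_int x)" by (auto simp: divide_simps)
  then show ?thesis using False by (simp add: floor_eq_iff)
qed

lemma rho_card:
  "rho_plus' p q n Ds = int (card {i \<in> I_set p q n Ds. Pi_plus' p q n Ds i = 0})"
proof -
  have fin: "finite (I_set p q n Ds)" unfolding I_set_def by simp
  have "rho_plus' p q n Ds = (\<Sum>i\<in>I_set p q n Ds. if Pi_plus' p q n Ds i = 0 then 1 else 0)"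
    unfolding rho_plus'_def using floor_term[OF Pi_nonneg] by simp
  also have "\<dots> = (\<Sum>i\<in>{i \<in> I_set p q n Ds. Pi_plus' p q n Ds i = 0}. 1)"
    by (rule sum.inter_filter[OF fin, symmetric])
  finally show ?thesis by simp
qed

lemma sqf_eq:
  fixes d m :: int and r :: rat
  assumes "squarefree d" "squarefree m" "r \<noteq> 0" "of_int d * r^2 = of_int m"
  shows "d = m"
proof -
  obtain a b where ab: "quotient_of r = (a, b)" by (cases "quotient_of r")
  have r: "r = of_int a / of_int b" using quotient_of_div[OF ab] .
  have b0: "b > 0" using quotient_of_denom_pos[OF ab] .
  have cop: "coprime a b" using quotient_of_coprime[OF ab] .
  have a0: "a \<noteq> 0" using assms(3) r by auto
  have "of_int (d * a^2) = (of_int (m * b^2) :: rat)"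
    using assms(4) b0 unfolding r by (simp add: field_simps power2_eq_square)
  then have eq: "d * a^2 = m * b^2" by (simp only: of_int_eq_iff)
  have cop2: "coprime (a^2) (b^2)" using cop by simp
  have "a^2 dvd m * b^2" using eq by (metis dvd_triv_right)
  then have "a^2 dvd m" using cop2 by (simp add: coprime_dvd_mult_left_iff)
  then have ua: "a dvd 1" using assms(2) squarefreeD by blast
  have "b^2 dvd d * a^2" using eq by (metis dvd_triv_right)
  then have "b^2 dvd d" using cop2 by (simp add: coprime_commute coprime_dvd_mult_left_iff)
  then have ub: "b dvd 1" using assms(1) squarefreeD by blast
  have "\<bar>a\<bar> = 1" using ua by simp
  then have "a^2 = 1" by (metis power2_abs one_power2)
  moreover have "b^2 = 1" using ub b0 by simp
  ultimately show ?thesis using eq by simp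
qed




lemma primeset_dvd:
  fixes U :: "int set"
  assumes "finite U" "\<forall>y\<in>U. prime y" "prime x"
  shows "x dvd \<Prod>U \<longleftrightarrow> x \<in> U"
proof
  assume "x dvd \<Prod>U"
  then obtain y where y: "y \<in> U" "x dvd y" using prime_dvd_prod_iff[OF assms(1) assms(3)] by auto
  then have "x = y" using primes_dvd_imp_eq[OF assms(3)] assms(2) by blast
  then show "x \<in> U" using y by simp
next
  assume "x \<in> U" then show "x dvd \<Prod>U" using assms(1) dvd_prodI[of U x "\<lambda>y. y"] by simp
qed

lemma primeset_sqf:
  fixes U :: "int set"
  assumes "\<forall>y\<in>U. prime y"
  shows "squarefree (\<Prod>U)"
  using assms by (intro squarefree_prod_coprime) (auto intro: primes_coprime squarefree_prime)

lemma primeset_pos: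
  fixes U :: "int set"
  assumes "\<forall>y\<in>U. prime y"
  shows "\<Prod>U > 0"
  using assms by (intro prod_pos) (auto intro: prime_gt_0_int)

context
  fixes p q :: int and n :: nat and Ds :: "nat \<Rightarrow> int"
  assumes pp: "prime p" and qp: "prime q" and po: "odd p" and qo: "odd q" and qd: "q - p = 2"
    and Dp: "\<forall>i\<in>{1..n}. prime (Ds i)" and inj: "inj_on Ds {1..n}"
    and D2: "\<not> 2 dvd (\<Prod>i\<in>{1..n}. Ds i)"
    and Dpd: "\<not> p dvd (\<Prod>i\<in>{1..n}. Ds i)"
    and Dqd: "\<not> q dvd (\<Prod>i\<in>{1..n}. Ds i)"
begin

lemma q_eq: "q = p + 2" using qd by simp

lemma Dsprime: "i \<in> {1..n} \<Longrightarrow> prime (Ds i)" using Dp by blast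

lemma Ds_dvd_D: "i \<in> {1..n} \<Longrightarrow> Ds i dvd (\<Prod>i\<in>{1..n}. Ds i)"
  by (rule dvd_prodI) simp_all

lemma Ds_ne2: assumes "i \<in> {1..n}" shows "Ds i \<noteq> 2"
proof
  assume "Ds i = 2" then show False using Ds_dvd_D[OF assms] D2 by simp
qed

lemma Ds_ndvd_p: "i \<in> {1..n} \<Longrightarrow> \<not> Ds i dvd p"
proof
  assume i: "i \<in> {1..n}" and "Ds i dvd p"
  then have "Ds i = p" using primes_dvd_imp_eq[OF Dsprime[OF i] pp] by blast
  then show False using Ds_dvd_D[OF i] Dpd by simp
qed

lemma Ds_ndvd_q: "i \<in> {1..n} \<Longrightarrow> \<not> Ds i dvd q"
proof
  assume i: "i \<in> {1..n}" and "Ds i dvd q"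
  then have "Ds i = q" using primes_dvd_imp_eq[OF Dsprime[OF i] qp] by blast
  then show False using Ds_dvd_D[OF i] Dqd by simp
qed

lemma dvd_prod_iff:
  assumes "B \<subseteq> {1..n}" "i \<in> {1..n}"
  shows "Ds i dvd (\<Prod>j\<in>B. Ds j) \<longleftrightarrow> i \<in> B"
proof
  have fB: "finite B" using assms(1) finite_subset by blast
  assume "Ds i dvd (\<Prod>j\<in>B. Ds j)"
  then obtain j where j: "j \<in> B" "Ds i dvd Ds j"
    using prime_dvd_prod_iff[OF fB Dsprime[OF assms(2)]] by auto
  have jn: "j \<in> {1..n}" using j(1) assms(1) by blast
  have "Ds i = Ds j" using primes_dvd_imp_eq[OF Dsprime[OF assms(2)] Dsprime[OF jn] j(2)] .
  then have "i = j" using inj assms(2) jn by (auto dest: inj_onD)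
  then show "i \<in> B" using j by simp
next
  have fB: "finite B" using assms(1) finite_subset by blast
  assume "i \<in> B" then show "Ds i dvd (\<Prod>j\<in>B. Ds j)" using fB by (intro dvd_prodI)
qed

lemma prod_pos: "B \<subseteq> {1..n} \<Longrightarrow> (\<Prod>j\<in>B. Ds j) > 0"
  by (intro prod_pos) (use Dsprime prime_gt_0_int in blast)

lemma split_D: "B \<subseteq> {1..n} \<Longrightarrow> (\<Prod>i\<in>{1..n}. Ds i) = (\<Prod>j\<in>B. Ds j) * (\<Prod>j\<in>{1..n}-B. Ds j)"
  using prod.subset_diff[of B "{1..n}" Ds] by (simp add: mult.commute)

lemma sqf_prod: "B \<subseteq> {1..n} \<Longrightarrow> squarefree (\<Prod>j\<in>B. Ds j)"
proof (intro squarefree_prod_coprime)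
  fix a b assume "B \<subseteq> {1..n}" "a \<in> B" "b \<in> B" "a \<noteq> b"
  then have "Ds a \<noteq> Ds b" using inj by (auto dest: inj_onD)
  then show "coprime (Ds a) (Ds b)" using Dsprime \<open>B \<subseteq> {1..n}\<close> \<open>a \<in> B\<close> \<open>b \<in> B\<close>
    by (intro primes_coprime) auto
next
  fix a assume "B \<subseteq> {1..n}" "a \<in> B"
  then show "squarefree (Ds a)" using Dsprime by (intro squarefree_prime) auto
qed


definition J where "J = {i \<in> I_set p q n Ds. Pi_plus' p q n Ds i = 0}"

lemma J_sub: "J \<subseteq> {1..n}" unfolding J_def I_set_def by auto

lemma J_P1: "i \<in> J \<Longrightarrow> Legendre (- p * ((\<Prod>j\<in>{1..n}. Ds j) div Ds i)) (Ds i) = 1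
           \<or> Legendre (- q * ((\<Prod>j\<in>{1..n}. Ds j) div Ds i)) (Ds i) = 1"
  unfolding J_def by (intro Pi_zero(1)) auto

lemma J_P2: "i \<in> J \<Longrightarrow> j \<in> {1..n} \<Longrightarrow> j \<noteq> i \<Longrightarrow> Legendre (Ds i) (Ds j) = 1 \<or> Legendre (p * q * Ds i) (Ds j) = 1"
  unfolding J_def by (intro Pi_zero(2)) auto

lemma leg_pq_unit:
  assumes j: "j \<in> {1..n}"
  shows "Legendre (p*q) (Ds j) = 1 \<or> Legendre (p*q) (Ds j) = -1"
proof -
  have "\<not> Ds j dvd p*q" using Ds_ndvd_p[OF j] Ds_ndvd_q[OF j] Dsprime[OF j]
    by (simp add: prime_dvd_mult_iff)
  then show ?thesis using leg_unit[OF Dsprime[OF j]] by blast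
qed

lemma J_P2': 
  assumes "k \<in> J" "j \<in> {1..n}" "j \<noteq> k" "Legendre (p*q) (Ds j) = 1"
  shows "Legendre (Ds k) (Ds j) = 1"
proof -
  have l: "prime (Ds j)" "Ds j \<noteq> 2" using Dsprime[OF assms(2)] Ds_ne2[OF assms(2)] by auto
  have "Legendre (p * q * Ds k) (Ds j) = Legendre (Ds k) (Ds j)"
    using leg_mult[OF l] assms(4) by simp
  then show ?thesis using J_P2[OF assms(1-3)] by auto
qed

lemma loc_Dj:
  assumes U0: "U0 \<subseteq> J" and j: "j \<in> {1..n}"
  shows "loc (Ds j) (\<Prod>i\<in>U0. Ds i) (\<Prod>i\<in>{1..n}-U0. Ds i) p q"
proof -
  define l where "l = Ds j"
  define d where "d = (\<Prod>i\<in>U0. Ds i)"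
  define e where "e = (\<Prod>i\<in>{1..n}-U0. Ds i)"
  have U0n: "U0 \<subseteq> {1..n}" using U0 J_sub by blast
  have fU0: "finite U0" using U0n finite_subset by blast
  have l: "prime l" "l \<noteq> 2" unfolding l_def using Dsprime[OF j] Ds_ne2[OF j] by auto
  have lpq: "Legendre (p*q) l = 1 \<or> Legendre (p*q) l = -1" unfolding l_def by (rule leg_pq_unit[OF j])
  show ?thesis unfolding l_def[symmetric] d_def[symmetric] e_def[symmetric]
  proof (cases "j \<in> U0")
    case True
    define d' where "d' = (\<Prod>i\<in>U0-{j}. Ds i)"
    have dd: "d = l * d'" unfolding d_def d'_def l_def using prod.remove[OF fU0 True] by simp
    have nd': "\<not> l dvd d'" unfolding l_def d'_def using dvd_prod_iff[of "U0-{j}" j] U0n j by auto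
    have ne: "\<not> l dvd e" unfolding l_def e_def using dvd_prod_iff[of "{1..n}-U0" j] True j by auto
    have lnz: "l \<noteq> 0" using l(1) by auto
    have Dde: "(\<Prod>i\<in>{1..n}. Ds i) = d * e" unfolding d_def e_def by (rule split_D[OF U0n])
    have Dh: "(\<Prod>i\<in>{1..n}. Ds i) div l = d' * e" unfolding Dde dd using lnz by simp
    have P1: "Legendre (- p * (d' * e)) l = 1 \<or> Legendre (- q * (d' * e)) l = 1"
      using J_P1[of j] True U0 Dh unfolding l_def by auto
    have goal: "Legendre (-(p*e)) l = 1 \<or> Legendre (-(q*e)) l = 1"
    proof (cases "Legendre (p*q) l = 1")
      case True
      have "\<forall>k\<in>U0-{j}. Legendre (Ds k) l = 1"
        using J_P2'[OF _ j _ True[unfolded l_def]] U0 unfolding l_def by blast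
      then have Ld': "Legendre d' l = 1" unfolding d'_def leg_prod[OF l] by simp
      have e1: "- p * (d' * e) = d' * (-(p*e))" "- q * (d' * e) = d' * (-(q*e))" by simp_all
      show ?thesis using P1 unfolding e1 leg_mult[OF l] Ld' by simp
    next
      case False
      then have m1: "Legendre (p*q) l = -1" using lpq by simp
      have "Legendre (e^2 * (p*q)) l = -1" using leg_sq_mult[OF l ne] m1 by simp
      moreover have "e^2 * (p*q) = (-(p*e)) * (-(q*e))" by (simp add: power2_eq_square)
      ultimately have "Legendre ((-(p*e)) * (-(q*e))) l = -1" by simp
      then have "Legendre (-(p*e)) l * Legendre (-(q*e)) l = -1"
        by (simp only: leg_mult[OF l])
      then show ?thesis using leg_cases[of "-(p*e)" l] leg_cases[of "-(q*e)" l] by auto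
    qed
    then show "loc l d e p q"
    proof
      assume "Legendre (-(p*e)) l = 1"
      then show ?thesis using locB[OF l dd nd' ne] by blast
    next
      assume "Legendre (-(q*e)) l = 1"
      then have "loc l d e q p" using locB[OF l dd nd' ne] by blast
      then show ?thesis using loc_swap by blast
    qed
  next
    case False
    have nd: "\<not> l dvd d" unfolding l_def d_def using dvd_prod_iff[OF U0n j] False by auto
    have goal: "Legendre d l = 1 \<or> Legendre (p*q*d) l = 1"
    proof (cases "Legendre (p*q) l = 1")
      case True
      have "\<forall>k\<in>U0. Legendre (Ds k) l = 1"
        using J_P2'[OF _ j _ True[unfolded l_def]] U0 False unfolding l_def by blast
      then have "Legendre d l = 1" unfolding d_def leg_prod[OF l] by simp
      then show ?thesis by simp
    next
      case F2: False
      then have m1: "Legendre (p*q) l = -1" using lpq by simp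
      have "Legendre d l = 1 \<or> Legendre d l = -1" using leg_unit[OF l(1) nd] .
      then show ?thesis using leg_mult[OF l, of "p*q" d] m1 by auto
    qed
    then show "loc l d e p q"
    proof
      assume "Legendre d l = 1" then show ?thesis using locA1[OF l] by blast
    next
      assume "Legendre (p*q*d) l = 1" then show ?thesis using locA2[OF l] by blast
    qed
  qed
qed


lemma mem_selmer:
  assumes U0: "U0 \<subseteq> J"
  shows "(\<Prod>i\<in>U0. Ds i) \<in> selmer_hat p q (\<Prod>i\<in>{1..n}. Ds i) (Ds ` {1..n})"
proof -
  define d where "d = (\<Prod>i\<in>U0. Ds i)"
  define e where "e = (\<Prod>i\<in>{1..n}-U0. Ds i)"
  define D where "D = (\<Prod>i\<in>{1..n}. Ds i)"
  have U0n: "U0 \<subseteq> {1..n}" using U0 J_sub by blast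
  have fU0: "finite U0" using U0n finite_subset by blast
  have De: "D = d * e" unfolding D_def d_def e_def by (rule split_D[OF U0n])
  have dpos: "d > 0" unfolding d_def by (rule prod_pos[OF U0n])
  have od: "odd d" "odd e" using D2 De unfolding D_def by auto
  have sqd: "squarefree d" unfolding d_def by (rule sqf_prod[OF U0n])
  have pnd: "\<not> p dvd d" "\<not> p dvd e" using Dpd De unfolding D_def by auto
  have qnd: "\<not> q dvd d" "\<not> q dvd e" using Dqd De unfolding D_def by auto
  have p2: "p \<noteq> 2" "q \<noteq> 2" using po qo by auto
  have pq: "\<not> p dvd q"
  proof
    assume "p dvd q" then have "p = q" using primes_dvd_imp_eq[OF pp qp] by blast
    then show False using qd by simp
  qed
  have qp': "\<not> q dvd p"
  proof
    assume "q dvd p" then have "q = p" using primes_dvd_imp_eq[OF qp pp] by blast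
    then show False using qd by simp
  qed
  have primes: "\<forall>r::int. prime r \<and> r dvd d \<longrightarrow> r \<in> {2, p, q} \<union> Ds ` {1..n}"
  proof (intro allI impI)
    fix r :: int assume r: "prime r \<and> r dvd d"
    then obtain k where k: "k \<in> U0" "r dvd Ds k"
      using prime_dvd_prod_iff[OF fU0, of r Ds] unfolding d_def by auto
    have kn: "k \<in> {1..n}" using k(1) U0n by blast
    have "r = Ds k" using primes_dvd_imp_eq[OF _ Dsprime[OF kn] k(2)] r by blast
    then show "r \<in> {2, p, q} \<union> Ds ` {1..n}" using kn by blast
  qed
  have real: "has_real_point ((p + q) * D) (p * q * D^2) d"
    unfolding has_real_point_def
  proof (intro exI conjI)
    show "((1::real), (0::real)) \<noteq> (0, 0)" by simp
    have "(sqrt (real_of_int d))^2 = real_of_int d" using dpos by simp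
    then show "real_of_int d * (sqrt (real_of_int d))^2 = (real_of_int d)^2 * 1^4
        + real_of_int ((p + q) * D) * real_of_int d * 1^2 * 0^2 + real_of_int (p * q * D^2) * 0^4"
      by (simp add: power2_eq_square)
  qed
  have loc_all: "loc l d e p q" if l: "l \<in> {2, p, q} \<union> Ds ` {1..n}" for l
  proof -
    consider "l = 2" | "l = p" | "l = q" | j where "j \<in> {1..n}" "l = Ds j" using l by blast
    then show ?thesis
    proof cases
      case 1
      have "loc 2 d e p (p+2)"
      proof (rule two_adic[OF po d_def De od])
        fix i assume i: "i \<in> U0"
        have iJ: "i \<in> I_set p q n Ds" using i U0 unfolding J_def by blast
        have "Ds i dvd D" unfolding D_def using Ds_dvd_D i U0n by blast
        moreover have "[Ds i = 1] (mod 8)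
            \<or> [(1 + p * (D div Ds i)) * (1 + q * (D div Ds i)) = 0] (mod 16)
            \<or> ([Ds i = 3] (mod 8) \<and> [p = 1] (mod 4))
            \<or> ([Ds i = 7] (mod 8) \<and> [p = 3] (mod 4))"
          using iJ unfolding I_set_def D_def Let_def by blast
        ultimately show "Ds i dvd D \<and>
         ([Ds i = 1] (mod 8)
          \<or> [(1 + p * (D div Ds i)) * (1 + (p+2) * (D div Ds i)) = 0] (mod 16)
          \<or> ([Ds i = 3] (mod 8) \<and> [p = 1] (mod 4))
          \<or> ([Ds i = 7] (mod 8) \<and> [p = 3] (mod 4)))" using q_eq by simp
      qed
      then show ?thesis using 1 q_eq by simp
    next
      case 2
      have "loc p d e p q" using locC[OF pp p2(1) pnd pq] .
      then show ?thesis using 2 by simp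
    next
      case 3
      have "loc q d e q p" using locC[OF qp p2(2) qnd qp'] .
      then show ?thesis using 3 loc_swap by blast
    next
      case 4
      then show ?thesis using loc_Dj[OF U0 4(1)] unfolding d_def e_def by simp
    qed
  qed
  have "d \<in> selmer_hat p q D (Ds ` {1..n})"
    unfolding selmer_hat_def
  proof (intro CollectI conjI ballI)
    show "d \<noteq> 0" using dpos by simp
    show "squarefree d" by (rule sqd)
    show "\<forall>r. prime r \<and> r dvd d \<longrightarrow> r \<in> {2, p, q} \<union> Ds ` {1..n}" by (rule primes)
    show "has_real_point ((p + q) * D) (p * q * D^2) d" by (rule real)
    fix l assume "l \<in> {2, p, q} \<union> Ds ` {1..n}"
    then show "has_padic_point l ((p + q) * D) (p * q * D^2) d"
      using loc_padic[OF De loc_all] by blast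
  qed
  then show ?thesis unfolding d_def D_def .
qed


lemma selmer_finite:
  "finite (selmer_hat p q (\<Prod>i\<in>{1..n}. Ds i) (Ds ` {1..n}))"
proof -
  define D where "D = (\<Prod>i\<in>{1..n}. Ds i)"
  define M where "M = 2 * p * q * D"
  have "D > 0" unfolding D_def by (rule prod_pos) simp
  then have Dnz: "D \<noteq> 0" by simp
  have Mnz: "M \<noteq> 0" unfolding M_def using Dnz pp qp by auto
  have "selmer_hat p q D (Ds ` {1..n}) \<subseteq> {d. d dvd M}"
  proof
    fix d assume "d \<in> selmer_hat p q D (Ds ` {1..n})"
    then have d: "d \<noteq> 0" "squarefree d" "\<forall>r::int. prime r \<and> r dvd d \<longrightarrow> r \<in> {2, p, q} \<union> Ds ` {1..n}"
      unfolding selmer_hat_def by auto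
    have "d dvd M"
    proof (rule multiplicity_le_imp_dvd[OF d(1)])
      fix r :: int assume r: "prime r"
      show "multiplicity r d \<le> multiplicity r M"
      proof (cases "r dvd d")
        case True
        then have "r \<in> {2, p, q} \<union> Ds ` {1..n}" using d(3) r by blast
        then have "r dvd M" unfolding M_def D_def using Ds_dvd_D by (auto intro: dvd_mult2 dvd_mult)
        moreover have "prime_elem r" using r by (rule prime_imp_prime_elem)
        ultimately have "multiplicity r M > 0" using prime_multiplicity_gt_zero_iff[of r M] Mnz by simp
        moreover have "multiplicity r d \<le> 1"
          using d(2) squarefree_factorial_semiring''[OF d(1)] r by blast
        ultimately show ?thesis by simp
      next
        case False
        then show ?thesis by (simp add: not_dvd_imp_multiplicity_0)
      qed
    qed
    then show "d \<in> {d. d dvd M}" by simp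
  qed
  moreover have "finite {d. d dvd M}" using Mnz by simp
  ultimately show ?thesis unfolding D_def by (rule finite_subset)
qed

lemma main:
  "\<exists>T \<subseteq> Ds ` {1..n}.
           int (card T) = rho_plus' p q n Ds
         \<and> gen_sq T \<subseteq> selmer_hat p q (\<Prod>i\<in>{1..n}. Ds i) (Ds ` {1..n})
         \<and> card (gen_sq T) = 2 ^ card T
         \<and> finite (selmer_hat p q (\<Prod>i\<in>{1..n}. Ds i) (Ds ` {1..n}))
         \<and> 2 ^ nat (rho_plus' p q n Ds) \<le> card (selmer_hat p q (\<Prod>i\<in>{1..n}. Ds i) (Ds ` {1..n}))"
proof -
  define S where "S = selmer_hat p q (\<Prod>i\<in>{1..n}. Ds i) (Ds ` {1..n})"
  define T where "T = Ds ` J"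
  have Jn: "J \<subseteq> {1..n}" by (rule J_sub)
  have fJ: "finite J" using Jn finite_subset by blast
  have injJ: "inj_on Ds J" using inj Jn inj_on_subset by blast
  have cT: "card T = card J" unfolding T_def using card_image[OF injJ] .
  have rho: "rho_plus' p q n Ds = int (card J)" unfolding J_def by (rule rho_card)
  have fT: "finite T" unfolding T_def using fJ by simp
  have Tpr: "\<forall>y\<in>T. prime y" unfolding T_def using Jn Dsprime by blast
  have TS: "T \<subseteq> Ds ` {1..n}" unfolding T_def using Jn by blast
  have prodS: "\<Prod>U \<in> S" if U: "U \<subseteq> T" for U
  proof -
    define U0 where "U0 = {i \<in> J. Ds i \<in> U}"
    have UU: "U = Ds ` U0" unfolding U0_def using U unfolding T_def by blast
    have inj0: "inj_on Ds U0" using injJ unfolding U0_def by (rule inj_on_subset) blast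
    have "\<Prod>U = (\<Prod>i\<in>U0. Ds i)" unfolding UU using prod.reindex[OF inj0, of "\<lambda>x. x"] by simp
    moreover have "U0 \<subseteq> J" unfolding U0_def by blast
    ultimately show ?thesis unfolding S_def using mem_selmer by simp
  qed
  have gen: "gen_sq T = (\<lambda>U. \<Prod>U) ` Pow T"
  proof
    show "gen_sq T \<subseteq> (\<lambda>U. \<Prod>U) ` Pow T"
    proof
      fix d assume "d \<in> gen_sq T"
      then have "d \<noteq> 0 \<and> squarefree d \<and> (\<exists>U \<subseteq> T. \<exists>r::rat. r \<noteq> 0 \<and> of_int d * r^2 = of_int (\<Prod>U))"
        unfolding gen_sq_def by simp
      then have d12: "d \<noteq> 0" "squarefree d" and ex: "\<exists>U \<subseteq> T. \<exists>r::rat. r \<noteq> 0 \<and> of_int d * r^2 = of_int (\<Prod>U)"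
        by simp_all
      from ex obtain U where U: "U \<subseteq> T" "\<exists>r::rat. r \<noteq> 0 \<and> of_int d * r^2 = of_int (\<Prod>U)" by blast
      from U(2) obtain r :: rat where r: "r \<noteq> 0" "of_int d * r^2 = of_int (\<Prod>U)" by blast
      have "\<forall>y\<in>U. prime y" using U(1) Tpr by (meson subsetD)
      then have "squarefree (\<Prod>U)" by (rule primeset_sqf)
      then have "d = \<Prod>U" by (rule sqf_eq[OF d12(2) _ r(1) r(2)])
      moreover have "U \<in> Pow T" using U(1) by simp
      ultimately show "d \<in> (\<lambda>U. \<Prod>U) ` Pow T" by (rule image_eqI)
    qed
  next
    show "(\<lambda>U. \<Prod>U) ` Pow T \<subseteq> gen_sq T"
    proof
      fix d assume "d \<in> (\<lambda>U. \<Prod>U) ` Pow T"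
      then obtain U where U: "U \<subseteq> T" "d = \<Prod>U" by blast
      have pr: "\<forall>y\<in>U. prime y" using U(1) Tpr by blast
      have "d > 0" using primeset_pos[OF pr] U(2) by simp
      moreover have "squarefree d" using primeset_sqf[OF pr] U(2) by simp
      moreover have "of_int d * (1::rat)^2 = of_int (\<Prod>U)" using U(2) by simp
      then have "\<exists>U \<subseteq> T. \<exists>r::rat. r \<noteq> 0 \<and> of_int d * r^2 = of_int (\<Prod>U)"
        using U(1) by (intro exI[of _ U] conjI exI[of _ "1::rat"]) simp_all
      ultimately show "d \<in> gen_sq T" unfolding gen_sq_def by simp
    qed
  qed
  have injP: "inj_on (\<lambda>U. \<Prod>U) (Pow T)"
  proof (rule inj_onI)
    fix U V assume UV: "U \<in> Pow T" "V \<in> Pow T" "\<Prod>U = \<Prod>V"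
    have fU: "finite U" "finite V" using UV(1,2) fT finite_subset by auto
    have pU: "\<forall>y\<in>U. prime y" "\<forall>y\<in>V. prime y" using UV(1,2) Tpr by auto
    have "x \<in> V" if "x \<in> U" for x
    proof -
      have px: "prime x" using pU(1) that by blast
      have "x dvd \<Prod>U" using primeset_dvd[OF fU(1) pU(1) px] that by simp
      then have "x dvd \<Prod>V" using UV(3) by simp
      then show ?thesis using primeset_dvd[OF fU(2) pU(2) px] by simp
    qed
    moreover have "x \<in> U" if "x \<in> V" for x
    proof -
      have px: "prime x" using pU(2) that by blast
      have "x dvd \<Prod>V" using primeset_dvd[OF fU(2) pU(2) px] that by simp
      then have "x dvd \<Prod>U" using UV(3) by simp
      then show ?thesis using primeset_dvd[OF fU(1) pU(1) px] by simp
    qed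
    ultimately show "U = V" by blast
  qed
  have card_gen: "card (gen_sq T) = 2 ^ card T"
    unfolding gen card_image[OF injP] using card_Pow[of T] fT by simp
  have sub: "gen_sq T \<subseteq> S" unfolding gen using prodS by blast
  have finS: "finite S" unfolding S_def by (rule selmer_finite)
  have "card (gen_sq T) \<le> card S" using card_mono[OF finS sub] .
  then have bound: "2 ^ nat (rho_plus' p q n Ds) \<le> card S" unfolding rho card_gen cT by simp
  have "int (card T) = rho_plus' p q n Ds" using cT rho by simp
  then have "T \<subseteq> Ds ` {1..n} \<and> int (card T) = rho_plus' p q n Ds \<and> gen_sq T \<subseteq> S
      \<and> card (gen_sq T) = 2 ^ card T \<and> finite S \<and> 2 ^ nat (rho_plus' p q n Ds) \<le> card S"
    using TS sub card_gen finS bound by simp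
  then show ?thesis unfolding S_def by blast
qed

end


theorem theorem1p3:
  fixes p q :: int and n :: nat and Ds :: "nat \<Rightarrow> int"
  assumes "prime p" and "prime q" and "odd p" and "odd q" and "q - p = 2"
    and "\<forall>i\<in>{1..n}. prime (Ds i)" and "inj_on Ds {1..n}"
    and "\<not> 2 dvd (\<Prod>i\<in>{1..n}. Ds i)"
    and "\<not> p dvd (\<Prod>i\<in>{1..n}. Ds i)"
    and "\<not> q dvd (\<Prod>i\<in>{1..n}. Ds i)"
  shows "\<exists>T \<subseteq> Ds ` {1..n}.
           int (card T) = rho_plus' p q n Ds
         \<and> gen_sq T \<subseteq> selmer_hat p q (\<Prod>i\<in>{1..n}. Ds i) (Ds ` {1..n})
         \<and> card (gen_sq T) = 2 ^ card T
         \<and> finite (selmer_hat p q (\<Prod>i\<in>{1..n}. Ds i) (Ds ` {1..n}))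
         \<and> 2 ^ nat (rho_plus' p q n Ds) \<le> card (selmer_hat p q (\<Prod>i\<in>{1..n}. Ds i) (Ds ` {1..n}))"
  by (rule main[OF assms])



end
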